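(* Let $M\in\mathbb{R}^{n\times n}$ be symmetric positive definite, let $N\ge1$, let timestep sizes $\delta_0,\delta_1,\dots,\delta_N>0$, let $\theta_0,\theta_{-1}\in\mathbb{R}^n$ be fixed, and let controls $u_1,\dots,u_N$ be fixed, where frame $i$ uses control $u_{\iota(i)}$. Let $\bar P(\cdot,u):\mathbb{R}^n\to\mathbb{R}$ be twice differentiable with locally Lipschitz second derivatives and $L$-curvature bounded (for some $L>0$) for every control value $u$. For $i=1,\dots,N$ and $\theta=(\theta_1,\dots,\theta_N)$ let $$\bar E_i=\frac{1}{2\delta_i^2}\Big\|\theta_i-\big(1+\tfrac{\delta_i}{\delta_{i-1}}\big)\theta_{i-1}+\tfrac{\delta_i}{\delta_{i-1}}\theta_{i-2}\Big\|_M^2+\bar P(\theta_i,u_{\iota(i)}),$$ $\Lambda_i=\frac12\|\partial\bar E_i/\partial\theta_i\|^2$, $\Lambda(\theta)=\sum_{i=1}^N\Lambda_i$, let $G(\theta)\in\mathbb{R}^{nN}$ be the stacked vector $(\partial\bar E_1/\partial\theta_1,\dots,\partial\bar E_N/\partial\theta_N)$, and let $J(\theta)=\partial G/\partial\theta\in\mathbb{R}^{nN\times nN}$ be its Jacobian (the block matrix whose $(i,k)$ block is $\partial^2\bar E_i/\partial\theta_i\partial\theta_k$). Suppose $\delta_i<\sqrt{\sigma_{\min}(M)/L}$ for all $i=1,\dots,N$. Then: (i) for each $i$ and fixed $\theta_{i-1},\theta_{i-2}$, the function $\theta_i\mapsto\Lambda_i$ satisfies the Polyak–Łojasiewicz condition,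 i.e. there is $\mu>0$ with $\frac12\|\nabla_{\theta_i}\Lambda_i\|^2\ge\mu(\Lambda_i-\inf\Lambda_i)$ for all $\theta_i$; (ii) $\sigma_{\min}(J(\theta))$ is bounded away from zero: there is $c>0$ (not depending on $\theta$ or the controls) with $\sigma_{\min}(J(\theta))\ge c$ for all $\theta$; (iii) $\theta\mapsto\Lambda(\theta)$ satisfies the Polyak–Łojasiewicz condition on $\mathbb{R}^{nN}$.
   Context: $\|x\|_M^2=x^TMx$; $\sigma_{\min}$ denotes the smallest singular value. A function $\phi:\mathbb{R}^n\to\mathbb{R}$ is $L$-weakly convex if $\phi(x)+\frac{L}{2}\|x\|^2$ is convex; $L$-gradient continuous if $\|\nabla\phi(x)-\nabla\phi(x')\|\le L\|x-x'\|$ for all $x,x'$; $L$-curvature bounded if both hold. The map $\iota$ assigns to each frame index the index of the control used there. *)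

theory Defs
  imports "HOL-Analysis.Analysis"
begin

definition grad :: "('a::real_inner \<Rightarrow> real) \<Rightarrow> 'a \<Rightarrow> 'a" where
  "grad f x = (THE g. GDERIV f x :> g)"

definition jac :: "(real^'n \<Rightarrow> real^'m) \<Rightarrow> real^'n \<Rightarrow> real^'n^'m" where
  "jac F x = (THE D. (F has_derivative (\<lambda>h. D *v h)) (at x))"

definition Mnorm2 :: "real^'n^'n \<Rightarrow> real^'n \<Rightarrow> real" where
  "Mnorm2 M x = x \<bullet> (M *v x)"

definition sigma_min :: "real^'n^'n \<Rightarrow> real" where
  "sigma_min A = Inf {norm (A *v x) | x. norm x = 1}"

text \<open>Smallest singular value of the \<open>nN \<times> nN\<close> block matrix whose \<open>(i,k)\<close> block
  (\<open>1 \<le> i,k \<le> N\<close>) is \<open>B i k\<close>; stacked vectors are \<open>v 1, \<dots>, v N\<close>.\<close>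
definition block_sigma_min :: "nat \<Rightarrow> (nat \<Rightarrow> nat \<Rightarrow> real^'n^'n) \<Rightarrow> real" where
  "block_sigma_min N B =
     Inf {sqrt (\<Sum>i=1..N. (norm (\<Sum>k=1..N. B i k *v v k))\<^sup>2) | v.
            (\<Sum>k=1..N. (norm (v k))\<^sup>2) = 1}"

definition frame :: "real^'n \<Rightarrow> real^'n \<Rightarrow> (nat \<Rightarrow> real^'n) \<Rightarrow> int \<Rightarrow> real^'n" where
  "frame th0 thm1 th j = (if j = -1 then thm1 else if j = 0 then th0 else th (nat j))"

definition Ebar :: "real^'n^'n \<Rightarrow> (nat \<Rightarrow> real) \<Rightarrow> (real^'n \<Rightarrow> 'u \<Rightarrow> real) \<Rightarrow> (nat \<Rightarrow> 'u)
    \<Rightarrow> (nat \<Rightarrow> nat) \<Rightarrow> real^'n \<Rightarrow> real^'n \<Rightarrow> (nat \<Rightarrow> real^'n) \<Rightarrow> nat \<Rightarrow> real" where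
  "Ebar M \<delta> P u \<iota> th0 thm1 th i =
     (let r = \<delta> i / \<delta> (i - 1);
          x = frame th0 thm1 th (int i) - (1 + r) *\<^sub>R frame th0 thm1 th (int i - 1)
              + r *\<^sub>R frame th0 thm1 th (int i - 2)
      in Mnorm2 M x / (2 * (\<delta> i)\<^sup>2) + P (th i) (u (\<iota> i)))"

definition Gi where
  "Gi M \<delta> P u \<iota> th0 thm1 th i = grad (\<lambda>t. Ebar M \<delta> P u \<iota> th0 thm1 (th(i := t)) i) (th i)"

definition Lam_i where
  "Lam_i M \<delta> P u \<iota> th0 thm1 th i = (norm (Gi M \<delta> P u \<iota> th0 thm1 th i))\<^sup>2 / 2"

definition Lam where
  "Lam N M \<delta> P u \<iota> th0 thm1 th = (\<Sum>i=1..N. Lam_i M \<delta> P u \<iota> th0 thm1 th i)"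

definition Jblock where
  "Jblock M \<delta> P u \<iota> th0 thm1 th i k =
     jac (\<lambda>t. Gi M \<delta> P u \<iota> th0 thm1 (th(k := t)) i) (th k)"

definition stacked_grad_norm2 :: "nat \<Rightarrow> ((nat \<Rightarrow> real^'n) \<Rightarrow> real) \<Rightarrow> (nat \<Rightarrow> real^'n) \<Rightarrow> real" where
  "stacked_grad_norm2 N f th = (\<Sum>k=1..N. (norm (grad (\<lambda>t. f (th(k := t))) (th k)))\<^sup>2)"

end

theory Submission
  imports Defs
begin

lemma linear_rep:
  fixes D :: "'a::euclidean_space \<Rightarrow> real"
  assumes "linear D"
  shows "\<exists>g. \<forall>h. D h = h \<bullet> g"
proof -
  have "D h = h \<bullet> (\<Sum>b\<in>Basis. D b *\<^sub>R b)" for h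
  proof -
    have "D h = D (\<Sum>b\<in>Basis. (h \<bullet> b) *\<^sub>R b)" by (simp add: euclidean_representation)
    also have "\<dots> = (\<Sum>b\<in>Basis. (h \<bullet> b) * D b)"
      using assms by (simp add: linear_sum linear_scale)
    also have "\<dots> = h \<bullet> (\<Sum>b\<in>Basis. D b *\<^sub>R b)"
      by (simp add: inner_sum_right mult.commute)
    finally show ?thesis .
  qed
  then show ?thesis by blast
qed

lemma grad_eq:
  assumes "GDERIV f x :> g" shows "grad f x = g"
proof -
  have "g' = g" if "GDERIV f x :> g'" for g'
  proof -
    have "(\<lambda>h. h \<bullet> g') = (\<lambda>h. h \<bullet> g)"
      using has_derivative_unique that assms unfolding gderiv_def by blast
    then have "(g' - g) \<bullet> g' = (g' - g) \<bullet> g" by metis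
    then have "(g' - g) \<bullet> (g' - g) = 0" by (simp add: inner_diff_right)
    then show ?thesis by simp
  qed
  then show ?thesis unfolding grad_def using assms by (metis the_equality)
qed

lemma grad_works:
  fixes f :: "'a::euclidean_space \<Rightarrow> real"
  assumes "f differentiable (at x)" shows "GDERIV f x :> grad f x"
proof -
  obtain D where D: "(f has_derivative D) (at x)" using assms differentiable_def by blast
  then have "linear D" using has_derivative_linear by blast
  then obtain g where "\<forall>h. D h = h \<bullet> g" using linear_rep by blast
  then have "GDERIV f x :> g" using D unfolding gderiv_def
    by (metis (no_types, lifting) ext)
  then show ?thesis using grad_eq by metis
qed

lemma jac_eq:
  assumes "(F has_derivative (\<lambda>h. D *v h)) (at x)" shows "jac F x = D"
proof -
  have "D' = D" if "(F has_derivative (\<lambda>h. D' *v h)) (at x)" for D'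
  proof -
    have "(\<lambda>h. D' *v h) = (\<lambda>h. D *v h)"
      using has_derivative_unique that assms by blast
    then show ?thesis by (metis matrix_eq)
  qed
  then show ?thesis unfolding jac_def using assms by (metis the_equality)
qed


lemma hess_lb:
  fixes gp :: "real^'n \<Rightarrow> real^'n" and H :: "real^'n^'n"
  assumes D: "(gp has_derivative (\<lambda>h. H *v h)) (at x)"
    and lip: "\<forall>x x'. norm (gp x - gp x') \<le> L * norm (x - x')"
  shows "h \<bullet> (H *v h) \<ge> - L * (norm h)\<^sup>2"
proof -
  define \<psi> where "\<psi> s = gp (x + s *\<^sub>R h) \<bullet> h" for s :: real
  have l: "((\<lambda>s::real. x + s *\<^sub>R h) has_derivative (\<lambda>s. s *\<^sub>R h)) (at 0)"
    by (auto intro!: derivative_eq_intros)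
  have D0: "(gp has_derivative (\<lambda>h. H *v h)) (at (x + 0 *\<^sub>R h))" using D by simp
  have "((\<lambda>s. gp (x + s *\<^sub>R h)) has_derivative (\<lambda>s. H *v (s *\<^sub>R h))) (at 0)"
    using has_derivative_compose[OF l D0] by simp
  then have "(\<psi> has_derivative (\<lambda>s. (H *v (s *\<^sub>R h)) \<bullet> h)) (at 0)"
    unfolding \<psi>_def by (intro has_derivative_inner_left)
  moreover have "(\<lambda>s. (H *v (s *\<^sub>R h)) \<bullet> h) = (\<lambda>s. s * ((H *v h) \<bullet> h))"
    by (simp add: matrix_vector_mult_scaleR)
  moreover have "(\<lambda>s. s * ((H *v h) \<bullet> h)) = (*) ((H *v h) \<bullet> h)" by (auto simp: mult.commute)
  ultimately have "(\<psi> has_field_derivative ((H *v h) \<bullet> h)) (at 0)"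
    by (simp add: has_field_derivative_def)
  then have lim: "((\<lambda>y. (\<psi> y - \<psi> 0) / (y - 0)) \<longlongrightarrow> (H *v h) \<bullet> h) (at 0)"
    using has_field_derivative_iff by blast
  have ev: "\<forall>\<^sub>F y in at (0::real). - L * (norm h)\<^sup>2 \<le> (\<psi> y - \<psi> 0) / (y - 0)"
  proof (rule eventually_at_topological[THEN iffD2], intro exI[of _ UNIV] conjI ballI impI, simp, simp)
    fix y :: real assume "y \<noteq> 0"
    have "\<bar>\<psi> y - \<psi> 0\<bar> = \<bar>(gp (x + y *\<^sub>R h) - gp x) \<bullet> h\<bar>"
      by (simp add: \<psi>_def inner_diff_left)
    also have "\<dots> \<le> norm (gp (x + y *\<^sub>R h) - gp x) * norm h" by (rule Cauchy_Schwarz_ineq2)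
    also have "\<dots> \<le> L * norm ((x + y *\<^sub>R h) - x) * norm h"
      using lip[rule_format, of "x + y *\<^sub>R h" x] by (intro mult_right_mono) auto
    also have "\<dots> = L * \<bar>y\<bar> * (norm h)\<^sup>2" by (simp add: power2_eq_square)
    finally have *: "\<bar>\<psi> y - \<psi> 0\<bar> \<le> L * \<bar>y\<bar> * (norm h)\<^sup>2" .
    have "\<bar>(\<psi> y - \<psi> 0) / y\<bar> = \<bar>\<psi> y - \<psi> 0\<bar> / \<bar>y\<bar>" by simp
    also have "\<dots> \<le> L * (norm h)\<^sup>2" using * \<open>y \<noteq> 0\<close>
      by (simp add: divide_le_eq mult.commute mult.left_commute)
    finally have **: "\<bar>(\<psi> y - \<psi> 0) / y\<bar> \<le> L * (norm h)\<^sup>2" .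
    have "- (L * (norm h)\<^sup>2) \<le> (\<psi> y - \<psi> 0) / y"
      using ** abs_ge_minus_self[of "(\<psi> y - \<psi> 0) / y"] by linarith
    then show "- L * (norm h)\<^sup>2 \<le> (\<psi> y - \<psi> 0) / (y - 0)" by simp
  qed
  have "- L * (norm h)\<^sup>2 \<le> (H *v h) \<bullet> h"
    by (rule tendsto_lowerbound[OF lim ev]) simp
  then show ?thesis by (simp add: inner_commute)
qed


lemma sym_inner:
  fixes M :: "real^'n^'n"
  assumes "transpose M = M"
  shows "x \<bullet> (M *v y) = y \<bullet> (M *v x)"
proof -
  have "x \<bullet> (M *v y) = (x v* M) \<bullet> y" by (simp add: dot_lmul_matrix)
  also have "\<dots> = (transpose M *v x) \<bullet> y" by simp
  also have "\<dots> = y \<bullet> (M *v x)" using assms by (simp add: inner_commute)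
  finally show ?thesis .
qed

lemma quad_zero:
  fixes a c :: real
  assumes "\<forall>t. 2 * t * a + t\<^sup>2 * c \<ge> 0" "c \<ge> 0" "a \<ge> 0"
  shows "a = 0"
proof (rule ccontr)
  assume "a \<noteq> 0"
  then have a: "a > 0" using assms by simp
  define t where "t = - a / (c + 1)"
  have "2 * t * a + t\<^sup>2 * c \<ge> 0" using assms by blast
  then have pos: "(2 * t * a + t\<^sup>2 * c) * (c + 1)^2 \<ge> 0" using assms by simp
  have e: "t * (c + 1) = - a" unfolding t_def using assms by (simp add: field_simps)
  have "(2 * t * a + t\<^sup>2 * c) * (c + 1)^2 = 2 * a * (c + 1) * (t * (c + 1)) + (t * (c + 1))^2 * c"
    by (simp add: algebra_simps power2_eq_square)
  also have "\<dots> = a^2 * (- c - 2)" unfolding e by (simp add: algebra_simps power2_eq_square)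
  finally have "(2 * t * a + t\<^sup>2 * c) * (c + 1)^2 = a^2 * (- c - 2)" .
  moreover note pos
  moreover have "a^2 * (- c - 2) < 0" using a assms
    by (simp add: mult_pos_neg)
  ultimately show False by linarith
qed

lemma sigma_min_quad:
  fixes M :: "real^'n^'n"
  assumes sym: "transpose M = M" and pd: "\<forall>x. x \<noteq> 0 \<longrightarrow> x \<bullet> (M *v x) > 0"
  shows "y \<bullet> (M *v y) \<ge> sigma_min M * (norm y)\<^sup>2"
proof -
  have lc: "continuous_on UNIV (\<lambda>x. M *v x)"
    by (simp add: linear_continuous_on)
  have cont: "continuous_on (sphere (0::real^'n) 1) (\<lambda>x. x \<bullet> (M *v x))"
    by (intro continuous_intros continuous_on_subset[OF lc]) auto
  have ne: "sphere (0::real^'n) 1 \<noteq> {}" by simp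
  obtain x0 where x0: "x0 \<in> sphere 0 1"
    and min: "\<forall>y\<in>sphere 0 1. x0 \<bullet> (M *v x0) \<le> y \<bullet> (M *v y)"
    using continuous_attains_inf[OF compact_sphere ne cont] by blast
  define mu where "mu = x0 \<bullet> (M *v x0)"
  have nx0: "norm x0 = 1" using x0 by simp
  have mupos: "mu > 0" unfolding mu_def using pd nx0 by (metis norm_zero zero_neq_one)
  have gen: "y \<bullet> (M *v y) \<ge> mu * (norm y)\<^sup>2" for y
  proof (cases "y = 0")
    case True then show ?thesis by simp
  next
    case False
    let ?z = "(1 / norm y) *\<^sub>R y"
    have "?z \<in> sphere 0 1" using False by simp
    then have "mu \<le> ?z \<bullet> (M *v ?z)" using min mu_def by blast
    also have "\<dots> = (y \<bullet> (M *v y)) / (norm y)\<^sup>2"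
      by (simp add: matrix_vector_mult_scaleR power2_eq_square)
    finally show ?thesis using False by (simp add: field_simps)
  qed
  define w where "w = M *v x0 - mu *\<^sub>R x0"
  have "\<forall>t. 2 * t * (w \<bullet> w) + t\<^sup>2 * (w \<bullet> (M *v w) - mu * (norm w)\<^sup>2) \<ge> 0"
  proof
    fix t :: real
    have G: "(x0 + t *\<^sub>R w) \<bullet> (M *v (x0 + t *\<^sub>R w)) \<ge> mu * (norm (x0 + t *\<^sub>R w))\<^sup>2"
      by (rule gen)
    have A: "(x0 + t *\<^sub>R w) \<bullet> (M *v (x0 + t *\<^sub>R w)) =
        mu + 2 * t * (w \<bullet> (M *v x0)) + t\<^sup>2 * (w \<bullet> (M *v w))"
      using sym_inner[OF sym, of x0 w]
      by (simp add: mu_def matrix_vector_mult_add_rdistrib matrix_vector_mult_scaleR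
          inner_add_left inner_add_right power2_eq_square algebra_simps)
    have B: "(norm (x0 + t *\<^sub>R w))\<^sup>2 = 1 + 2 * t * (w \<bullet> x0) + t\<^sup>2 * (norm w)\<^sup>2"
    proof -
      have "(norm (x0 + t *\<^sub>R w))\<^sup>2 = (x0 + t *\<^sub>R w) \<bullet> (x0 + t *\<^sub>R w)"
        by (rule power2_norm_eq_inner)
      also have "\<dots> = x0 \<bullet> x0 + 2 * t * (w \<bullet> x0) + t\<^sup>2 * (w \<bullet> w)"
        by (simp add: inner_add_left inner_add_right inner_commute power2_eq_square algebra_simps)
      also have "x0 \<bullet> x0 = 1" using nx0 by (simp add: dot_square_norm)
      also have "w \<bullet> w = (norm w)\<^sup>2" by (simp add: dot_square_norm)
      finally show ?thesis .
    qed
    have W: "w \<bullet> w = w \<bullet> (M *v x0) - mu * (w \<bullet> x0)"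
      by (simp add: w_def inner_diff_right)
    have G2: "mu + 2 * t * (w \<bullet> (M *v x0)) + t\<^sup>2 * (w \<bullet> (M *v w)) \<ge>
       mu * (1 + 2 * t * (w \<bullet> x0) + t\<^sup>2 * (norm w)\<^sup>2)"
      using G unfolding A B .
    have L: "2 * t * (w \<bullet> w) + t\<^sup>2 * (w \<bullet> (M *v w) - mu * (norm w)\<^sup>2) =
      (mu + 2 * t * (w \<bullet> (M *v x0)) + t\<^sup>2 * (w \<bullet> (M *v w))) -
       mu * (1 + 2 * t * (w \<bullet> x0) + t\<^sup>2 * (norm w)\<^sup>2)"
      unfolding W by (simp add: algebra_simps)
    show "2 * t * (w \<bullet> w) + t\<^sup>2 * (w \<bullet> (M *v w) - mu * (norm w)\<^sup>2) \<ge> 0"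
      unfolding L using G2 by linarith
  qed
  moreover have "w \<bullet> (M *v w) - mu * (norm w)\<^sup>2 \<ge> 0" using gen[of w] by simp
  ultimately have "w \<bullet> w = 0" using quad_zero by (meson inner_ge_zero)
  then have "M *v x0 = mu *\<^sub>R x0" unfolding w_def by simp
  then have nm: "norm (M *v x0) = mu" using nx0 mupos by simp
  have "sigma_min M \<le> mu"
    unfolding sigma_min_def
    by (rule cInf_lower) (use nx0 nm in \<open>auto intro: bdd_belowI[of _ 0]\<close>)
  then show ?thesis using gen[of y] by (smt (verit) mult_right_mono zero_le_power2)
qed


fun Tb :: "real \<Rightarrow> real \<Rightarrow> nat \<Rightarrow> real" where
  "Tb m A 0 = 0"
| "Tb m A (Suc n) = Tb m A n + (1 + A * Tb m A n) / m"

lemma Tb_nonneg: "m > 0 \<Longrightarrow> A \<ge> 0 \<Longrightarrow> Tb m A n \<ge> 0"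
  by (induction n) auto

lemma Tb_pos: "m > 0 \<Longrightarrow> A \<ge> 0 \<Longrightarrow> n \<ge> 1 \<Longrightarrow> Tb m A n > 0"
proof (induction n)
  case 0 then show ?case by simp
next
  case (Suc n)
  have "Tb m A n \<ge> 0" using Suc Tb_nonneg by blast
  moreover have "1 + A * Tb m A n > 0" using Suc calculation
    by (metis add_pos_nonneg mult_nonneg_nonneg zero_less_one)
  then have "(1 + A * Tb m A n) / m > 0" using Suc by simp
  ultimately show ?case by simp
qed

lemma tri_fwd:
  fixes a :: "nat \<Rightarrow> real"
  assumes a0: "\<forall>k. a k \<ge> 0" and m: "m > 0" and A: "A \<ge> 0" and b: "b \<ge> 0"
    and h: "\<forall>i\<in>{1..n}. m * a i \<le> b + A * (\<Sum>k\<in>{1..<i}. a k)"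
  shows "(\<Sum>k=1..n. a k) \<le> Tb m A n * b"
  using h
proof (induction n)
  case 0 then show ?case by simp
next
  case (Suc n)
  then have IH: "(\<Sum>k=1..n. a k) \<le> Tb m A n * b" by auto
  have "m * a (Suc n) \<le> b + A * (\<Sum>k\<in>{1..<Suc n}. a k)"
    using Suc.prems[rule_format, of "Suc n"] by simp
  also have "{1..<Suc n} = {1..n}" by auto
  finally have "m * a (Suc n) \<le> b + A * (\<Sum>k=1..n. a k)" .
  also have "\<dots> \<le> b + A * (Tb m A n * b)" using IH A by (simp add: mult_left_mono)
  finally have "a (Suc n) \<le> (b + A * (Tb m A n * b)) / m" using m by (simp add: field_simps)
  then have "(\<Sum>k=1..Suc n. a k) \<le> Tb m A n * b + (b + A * (Tb m A n * b)) / m"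
    using IH by (simp add: sum.cl_ivl_Suc)
  also have "\<dots> = Tb m A (Suc n) * b" using m by (simp add: field_simps)
  finally show ?case .
qed

lemma tri_bwd:
  fixes a :: "nat \<Rightarrow> real"
  assumes a0: "\<forall>k. a k \<ge> 0" and m: "m > 0" and A: "A \<ge> 0" and b: "b \<ge> 0"
    and h: "\<forall>i\<in>{1..n}. m * a i \<le> b + A * (\<Sum>k\<in>{i<..n}. a k)"
  shows "(\<Sum>k=1..n. a k) \<le> Tb m A n * b"
proof -
  have "j \<le> n \<Longrightarrow> (\<Sum>k\<in>{n-j<..n}. a k) \<le> Tb m A j * b" for j
  proof (induction j)
    case 0 then show ?case by simp
  next
    case (Suc j)
    then have IH: "(\<Sum>k\<in>{n-j<..n}. a k) \<le> Tb m A j * b" by auto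
    have i: "n - j \<in> {1..n}" using Suc.prems by auto
    have "m * a (n - j) \<le> b + A * (\<Sum>k\<in>{n-j<..n}. a k)" using h i by blast
    also have "\<dots> \<le> b + A * (Tb m A j * b)" using IH A by (simp add: mult_left_mono)
    finally have aj: "a (n - j) \<le> (b + A * (Tb m A j * b)) / m" using m by (simp add: field_simps)
    have set: "{n - Suc j<..n} = insert (n - j) {n-j<..n}" using Suc.prems by auto
    have "(\<Sum>k\<in>{n - Suc j<..n}. a k) = a (n - j) + (\<Sum>k\<in>{n-j<..n}. a k)"
      unfolding set by (simp)
    also have "\<dots> \<le> (b + A * (Tb m A j * b)) / m + Tb m A j * b" using aj IH by linarith
    also have "\<dots> = Tb m A (Suc j) * b" using m by (simp add: field_simps)
    finally show ?case .
  qed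
  from this[of n] show ?thesis by (simp add: atLeastSucAtMost_greaterThanAtMost)
qed

lemma sum_sq_le:
  fixes a :: "nat \<Rightarrow> real"
  assumes "finite S" "\<forall>k\<in>S. a k \<ge> 0"
  shows "(\<Sum>k\<in>S. (a k)\<^sup>2) \<le> (\<Sum>k\<in>S. a k)\<^sup>2"
  using assms
proof (induction S rule: finite_induct)
  case empty then show ?case by simp
next
  case (insert x F)
  have s0: "(\<Sum>k\<in>F. a k) \<ge> 0" using insert by (simp add: sum_nonneg)
  have "(\<Sum>k\<in>insert x F. (a k)\<^sup>2) = (a x)\<^sup>2 + (\<Sum>k\<in>F. (a k)\<^sup>2)" using insert by simp
  also have "\<dots> \<le> (a x)\<^sup>2 + (\<Sum>k\<in>F. a k)\<^sup>2" using insert by simp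
  also have "\<dots> \<le> (a x + (\<Sum>k\<in>F. a k))\<^sup>2" using s0 insert
    by (simp add: power2_eq_square algebra_simps)
  also have "\<dots> = (\<Sum>k\<in>insert x F. a k)\<^sup>2" using insert by simp
  finally show ?case .
qed


definition rr :: "(nat \<Rightarrow> real) \<Rightarrow> nat \<Rightarrow> real" where
  "rr \<delta> i = \<delta> i / \<delta> (i - 1)"

definition Xv :: "real^'n \<Rightarrow> real^'n \<Rightarrow> (nat \<Rightarrow> real) \<Rightarrow> (nat \<Rightarrow> real^'n) \<Rightarrow> nat \<Rightarrow> real^'n" where
  "Xv th0 thm1 \<delta> th i = frame th0 thm1 th (int i) - (1 + rr \<delta> i) *\<^sub>R frame th0 thm1 th (int i - 1)
      + rr \<delta> i *\<^sub>R frame th0 thm1 th (int i - 2)"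

definition gam :: "(nat \<Rightarrow> real) \<Rightarrow> nat \<Rightarrow> nat \<Rightarrow> real" where
  "gam \<delta> i k = (if k = i then 1 else 0) - (1 + rr \<delta> i) * (if int k = int i - 1 then 1 else 0)
     + rr \<delta> i * (if int k = int i - 2 then 1 else 0)"

lemma frame_upd:
  assumes "k \<ge> 1"
  shows "frame th0 thm1 (th(k:=t)) j = frame th0 thm1 th j + (if j = int k then t - th k else 0)"
  using assms unfolding frame_def by (auto simp: nat_eq_iff)

lemma Xv_upd:
  assumes "k \<ge> 1"
  shows "Xv th0 thm1 \<delta> (th(k:=t)) i = Xv th0 thm1 \<delta> th i + gam \<delta> i k *\<^sub>R (t - th k)"
  unfolding Xv_def gam_def frame_upd[OF assms]
  by (simp add: algebra_simps)

lemma Ebar_eq: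
  "Ebar M \<delta> P u \<iota> th0 thm1 th i =
     Mnorm2 M (Xv th0 thm1 \<delta> th i) / (2 * (\<delta> i)\<^sup>2) + P (th i) (u (\<iota> i))"
  unfolding Ebar_def Xv_def rr_def Let_def by simp

lemma gam_same: "gam \<delta> i i = 1"
  unfolding gam_def by simp

lemma Gi_eq:
  fixes M :: "real^'n^'n"
  assumes sym: "transpose M = M" and i: "i \<ge> 1"
    and Pd: "\<forall>v x. (\<lambda>y. P y v) differentiable (at x)"
  shows "Gi M \<delta> P u \<iota> th0 thm1 th i =
     (1 / (\<delta> i)\<^sup>2) *\<^sub>R (M *v Xv th0 thm1 \<delta> th i) + grad (\<lambda>z. P z (u (\<iota> i))) (th i)"
proof -
  let ?v = "u (\<iota> i)"
  let ?y = "Xv th0 thm1 \<delta> th i"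
  let ?c = "1 / (2 * (\<delta> i)\<^sup>2)"
  have feq: "(\<lambda>t. Ebar M \<delta> P u \<iota> th0 thm1 (th(i := t)) i) =
     (\<lambda>t. ?c * ((?y + (t - th i)) \<bullet> (M *v (?y + (t - th i)))) + P t ?v)"
    unfolding Ebar_eq Xv_upd[OF i] gam_same Mnorm2_def by (simp add: field_simps)
  have gP: "GDERIV (\<lambda>z. P z ?v) (th i) :> grad (\<lambda>z. P z ?v) (th i)"
    using Pd grad_works by blast
  have lin: "((\<lambda>t. ?y + (t - th i)) has_derivative (\<lambda>h. h)) (at (th i))"
    by (auto intro!: derivative_eq_intros)
  have linM: "((\<lambda>t. M *v (?y + (t - th i))) has_derivative (\<lambda>h. M *v h)) (at (th i))"
    using bounded_linear.has_derivative[OF matrix_vector_mul_bounded_linear lin] .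
  have "((\<lambda>t. ?c * ((?y + (t - th i)) \<bullet> (M *v (?y + (t - th i)))) + P t ?v) has_derivative
      (\<lambda>h. ?c * ((?y + (th i - th i)) \<bullet> (M *v h) + h \<bullet> (M *v (?y + (th i - th i))))
            + h \<bullet> grad (\<lambda>z. P z ?v) (th i))) (at (th i))"
    using gP unfolding gderiv_def
    by (intro has_derivative_add has_derivative_mult_right has_derivative_inner lin linM)
  moreover have "(\<lambda>h. ?c * ((?y + (th i - th i)) \<bullet> (M *v h) + h \<bullet> (M *v (?y + (th i - th i))))
            + h \<bullet> grad (\<lambda>z. P z ?v) (th i)) =
      (\<lambda>h. h \<bullet> ((1 / (\<delta> i)\<^sup>2) *\<^sub>R (M *v ?y) + grad (\<lambda>z. P z ?v) (th i)))"
  proof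
    fix h
    have "?y \<bullet> (M *v h) = h \<bullet> (M *v ?y)" by (rule sym_inner[OF sym])
    then show "?c * ((?y + (th i - th i)) \<bullet> (M *v h) + h \<bullet> (M *v (?y + (th i - th i))))
            + h \<bullet> grad (\<lambda>z. P z ?v) (th i) =
       h \<bullet> ((1 / (\<delta> i)\<^sup>2) *\<^sub>R (M *v ?y) + grad (\<lambda>z. P z ?v) (th i))"
      by (simp add: inner_add_right)
  qed
  ultimately have "GDERIV (\<lambda>t. Ebar M \<delta> P u \<iota> th0 thm1 (th(i := t)) i) (th i) :>
      ((1 / (\<delta> i)\<^sup>2) *\<^sub>R (M *v ?y) + grad (\<lambda>z. P z ?v) (th i))"
    unfolding gderiv_def feq by simp
  then show ?thesis unfolding Gi_def by (rule grad_eq)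
qed


definition Jb where
  "Jb M \<delta> H u \<iota> th i k = (gam \<delta> i k / (\<delta> i)\<^sup>2) *\<^sub>R M + (if k = i then H (u (\<iota> i)) (th i) else 0)"

lemma G_deriv:
  fixes M :: "real^'n^'n"
  assumes sym: "transpose M = M" and i: "i \<ge> 1" and k: "k \<ge> 1"
    and Pd: "\<forall>v x. (\<lambda>y. P y v) differentiable (at x)"
    and hH: "\<forall>v x. ((\<lambda>y. grad (\<lambda>z. P z v) y) has_derivative (\<lambda>h. H v x *v h)) (at x)"
  shows "((\<lambda>t. Gi M \<delta> P u \<iota> th0 thm1 (th(k := t)) i) has_derivative
            (\<lambda>h. Jb M \<delta> H u \<iota> th i k *v h)) (at (th k))"
proof -
  let ?v = "u (\<iota> i)"
  let ?g = "\<lambda>y. grad (\<lambda>z. P z ?v) y"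
  let ?y = "Xv th0 thm1 \<delta> th i"
  have eq: "(\<lambda>t. Gi M \<delta> P u \<iota> th0 thm1 (th(k := t)) i) =
     (\<lambda>t. (1 / (\<delta> i)\<^sup>2) *\<^sub>R (M *v (?y + gam \<delta> i k *\<^sub>R (t - th k))) + ?g ((th(k:=t)) i))"
    unfolding Gi_eq[OF sym i Pd] Xv_upd[OF k] by simp
  have lin: "((\<lambda>t. ?y + gam \<delta> i k *\<^sub>R (t - th k)) has_derivative (\<lambda>h. gam \<delta> i k *\<^sub>R h)) (at (th k))"
    by (auto intro!: derivative_eq_intros)
  have linM: "((\<lambda>t. M *v (?y + gam \<delta> i k *\<^sub>R (t - th k))) has_derivative
      (\<lambda>h. M *v (gam \<delta> i k *\<^sub>R h))) (at (th k))"
    using bounded_linear.has_derivative[OF matrix_vector_mul_bounded_linear lin] .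
  have gd: "((\<lambda>t. ?g ((th(k:=t)) i)) has_derivative
      (\<lambda>h. (if k = i then H ?v (th i) else 0) *v h)) (at (th k))"
  proof (cases "k = i")
    case True
    then show ?thesis using hH by simp
  next
    case False
    then show ?thesis by simp
  qed
  have "((\<lambda>t. (1 / (\<delta> i)\<^sup>2) *\<^sub>R (M *v (?y + gam \<delta> i k *\<^sub>R (t - th k))) + ?g ((th(k:=t)) i))
     has_derivative (\<lambda>h. (1 / (\<delta> i)\<^sup>2) *\<^sub>R (M *v (gam \<delta> i k *\<^sub>R h)) +
        (if k = i then H ?v (th i) else 0) *v h)) (at (th k))"
    by (intro has_derivative_add has_derivative_scaleR_right linM gd)
  moreover have "(\<lambda>h. (1 / (\<delta> i)\<^sup>2) *\<^sub>R (M *v (gam \<delta> i k *\<^sub>R h)) +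
        (if k = i then H ?v (th i) else 0) *v h) = (\<lambda>h. Jb M \<delta> H u \<iota> th i k *v h)"
    unfolding Jb_def
    by (auto simp: matrix_vector_mult_add_rdistrib matrix_vector_mult_scaleR scaleR_matrix_vector_assoc[symmetric])
  ultimately show ?thesis unfolding eq by simp
qed

lemma Jblock_eq:
  fixes M :: "real^'n^'n"
  assumes sym: "transpose M = M" and i: "i \<ge> 1" and k: "k \<ge> 1"
    and Pd: "\<forall>v x. (\<lambda>y. P y v) differentiable (at x)"
    and hH: "\<forall>v x. ((\<lambda>y. grad (\<lambda>z. P z v) y) has_derivative (\<lambda>h. H v x *v h)) (at x)"
  shows "Jblock M \<delta> P u \<iota> th0 thm1 th i k = Jb M \<delta> H u \<iota> th i k"
  unfolding Jblock_def using G_deriv[OF assms] by (rule jac_eq)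

lemma grad_halfnorm:
  fixes F :: "real^'n \<Rightarrow> real^'m"
  assumes "(F has_derivative (\<lambda>h. D *v h)) (at x)"
  shows "GDERIV (\<lambda>t. (norm (F t))\<^sup>2 / 2) x :> (transpose D *v F x)"
proof -
  have e: "(\<lambda>t. (norm (F t))\<^sup>2 / 2) = (\<lambda>t. (1/2) * (F t \<bullet> F t))"
    by (simp add: power2_norm_eq_inner)
  have "((\<lambda>t. (1/2) * (F t \<bullet> F t)) has_derivative (\<lambda>h. (1/2) * (F x \<bullet> (D *v h) + (D *v h) \<bullet> F x))) (at x)"
    by (intro has_derivative_mult_right has_derivative_inner[OF assms assms])
  moreover have "(\<lambda>h. (1/2) * (F x \<bullet> (D *v h) + (D *v h) \<bullet> F x)) = (\<lambda>h. h \<bullet> (transpose D *v F x))"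
  proof
    fix h
    have "(D *v h) \<bullet> F x = F x \<bullet> (D *v h)" by (rule inner_commute)
    moreover have "h \<bullet> (F x v* D) = F x \<bullet> (D *v h)"
      by (metis dot_lmul_matrix inner_commute)
    ultimately show "(1/2) * (F x \<bullet> (D *v h) + (D *v h) \<bullet> F x) = h \<bullet> (transpose D *v F x)"
      by simp
  qed
  ultimately show ?thesis unfolding gderiv_def e by simp
qed


lemma coercive_norm:
  fixes D :: "real^'n^'n"
  assumes c: "\<forall>x. x \<bullet> (D *v x) \<ge> m * (norm x)\<^sup>2" and m: "m \<ge> 0"
  shows "norm (D *v x) \<ge> m * norm x" "norm (transpose D *v x) \<ge> m * norm x"
proof -
  have t: "x \<bullet> (transpose D *v x) = x \<bullet> (D *v x)"
    by (metis dot_lmul_matrix inner_commute transpose_matrix_vector)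
  have gen: "norm y \<ge> m * norm x" if "x \<bullet> y \<ge> m * (norm x)\<^sup>2" for y
  proof (cases "x = 0")
    case True then show ?thesis by simp
  next
    case False
    have "m * norm x * norm x \<le> norm x * norm y"
      using that Cauchy_Schwarz_ineq2[of x y] by (simp add: power2_eq_square)
    then show ?thesis using False by (simp add: mult.commute)
  qed
  show "norm (D *v x) \<ge> m * norm x" using gen c by blast
  show "norm (transpose D *v x) \<ge> m * norm x" using gen c t by metis
qed

lemma gam_bound:
  assumes "rr \<delta> i \<ge> 0" "k \<noteq> i"
  shows "\<bar>gam \<delta> i k\<bar> \<le> 1 + rr \<delta> i"
  using assms unfolding gam_def by auto

lemma gam_zero:
  assumes "k > i"
  shows "gam \<delta> i k = 0"
  using assms unfolding gam_def by auto

lemma offsum_fwd: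
  fixes g :: "nat \<Rightarrow> 'a::real_normed_vector"
  assumes i: "i \<in> {1..N}" and h: "\<forall>k\<in>{1..N}-{i}. norm (g k) \<le> (if k < i then A * a k else 0)"
  shows "norm (\<Sum>k\<in>{1..N}-{i}. g k) \<le> A * (\<Sum>k\<in>{1..<i}. a k)"
proof -
  have "norm (\<Sum>k\<in>{1..N}-{i}. g k) \<le> (\<Sum>k\<in>{1..N}-{i}. (if k < i then A * a k else 0))"
    using h by (intro sum_norm_le) auto
  also have "\<dots> = (\<Sum>k\<in>{k\<in>{1..N}-{i}. k < i}. A * a k)"
    by (rule sum.inter_filter[symmetric]) simp
  also have "{k\<in>{1..N}-{i}. k < i} = {1..<i}" using i by auto
  finally show ?thesis by (simp add: sum_distrib_left)
qed

lemma offsum_bwd: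
  fixes g :: "nat \<Rightarrow> 'a::real_normed_vector"
  assumes k: "k \<in> {1..N}" and h: "\<forall>i\<in>{1..N}-{k}. norm (g i) \<le> (if k < i then A * a i else 0)"
  shows "norm (\<Sum>i\<in>{1..N}-{k}. g i) \<le> A * (\<Sum>i\<in>{k<..N}. a i)"
proof -
  have "norm (\<Sum>i\<in>{1..N}-{k}. g i) \<le> (\<Sum>i\<in>{1..N}-{k}. (if k < i then A * a i else 0))"
    using h by (intro sum_norm_le) auto
  also have "\<dots> = (\<Sum>i\<in>{i\<in>{1..N}-{k}. k < i}. A * a i)"
    by (rule sum.inter_filter[symmetric]) simp
  also have "{i\<in>{1..N}-{k}. k < i} = {k<..N}" using k by auto
  finally show ?thesis by (simp add: sum_distrib_left)
qed


lemma INF_nonneg: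
  fixes f :: "'a \<Rightarrow> real"
  assumes "\<forall>s. f s \<ge> 0" shows "(INF s. f s) \<ge> 0"
  using assms by (intro cINF_greatest) auto

lemma sqrt_member_le:
  fixes a :: "nat \<Rightarrow> real"
  assumes "i \<in> S" "finite S" "\<forall>k\<in>S. a k \<ge> 0"
  shows "sqrt (a i) \<le> sqrt (\<Sum>k\<in>S. a k)"
  using assms by (intro real_sqrt_le_mono member_le_sum) auto

theorem corollary1:
  fixes M :: "real^'n^'n" and N :: nat and \<delta> :: "nat \<Rightarrow> real" and L :: real
    and P :: "real^'n \<Rightarrow> 'u \<Rightarrow> real"
    and th0 thm1 :: "real^'n" and u :: "nat \<Rightarrow> 'u" and \<iota> :: "nat \<Rightarrow> nat"
  assumes M_sym: "transpose M = M"
    and M_pd: "\<forall>x. x \<noteq> 0 \<longrightarrow> x \<bullet> (M *v x) > 0"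
    and N_ge: "N \<ge> 1"
    and \<delta>_pos: "\<forall>i\<in>{0..N}. \<delta> i > 0"
    and \<iota>_range: "\<forall>i\<in>{1..N}. \<iota> i \<in> {1..N}"
    and L_pos: "L > 0"
    and P_diff: "\<forall>v x. (\<lambda>y. P y v) differentiable (at x)"
    and P_twice: "\<forall>v. \<exists>H :: real^'n \<Rightarrow> real^'n^'n.
        (\<forall>x. ((\<lambda>y. grad (\<lambda>z. P z v) y) has_derivative (\<lambda>h. H x *v h)) (at x)) \<and>
        (\<forall>x. \<exists>e>0. \<exists>K. \<forall>y\<in>ball x e. \<forall>z\<in>ball x e. norm (H y - H z) \<le> K * dist y z)"
    and P_weakly_convex: "\<forall>v. convex_on UNIV (\<lambda>x. P x v + L / 2 * (norm x)\<^sup>2)"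
    and P_grad_lip: "\<forall>v x x'. norm (grad (\<lambda>z. P z v) x - grad (\<lambda>z. P z v) x') \<le> L * norm (x - x')"
    and \<delta>_small: "\<forall>i\<in>{1..N}. \<delta> i < sqrt (sigma_min M / L)"
  shows
    "(\<forall>i\<in>{1..N}. \<forall>th :: nat \<Rightarrow> real^'n. \<exists>\<mu>>0. \<forall>t.
        (norm (grad (\<lambda>s. Lam_i M \<delta> P u \<iota> th0 thm1 (th(i := s)) i) t))\<^sup>2 / 2
          \<ge> \<mu> * (Lam_i M \<delta> P u \<iota> th0 thm1 (th(i := t)) i
                  - (INF s. Lam_i M \<delta> P u \<iota> th0 thm1 (th(i := s)) i)))
     \<and> (\<exists>c>0. \<forall>(u' :: nat \<Rightarrow> 'u) \<iota>'. (\<forall>i\<in>{1..N}. \<iota>' i \<in> {1..N}) \<longrightarrow>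
          (\<forall>th :: nat \<Rightarrow> real^'n.
             block_sigma_min N (Jblock M \<delta> P u' \<iota>' th0 thm1 th) \<ge> c))
     \<and> (\<exists>\<mu>>0. \<forall>th :: nat \<Rightarrow> real^'n.
          stacked_grad_norm2 N (Lam N M \<delta> P u \<iota> th0 thm1) th / 2
            \<ge> \<mu> * (Lam N M \<delta> P u \<iota> th0 thm1 th - (INF s. Lam N M \<delta> P u \<iota> th0 thm1 s)))"
proof -
  have "\<forall>v. \<exists>Hv :: real^'n \<Rightarrow> real^'n^'n.
        \<forall>x. ((\<lambda>y. grad (\<lambda>z. P z v) y) has_derivative (\<lambda>h. Hv x *v h)) (at x)"
    using P_twice by blast
  from choice[OF this] obtain H :: "'u \<Rightarrow> real^'n \<Rightarrow> real^'n^'n" where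
    hH: "\<forall>v x. ((\<lambda>y. grad (\<lambda>z. P z v) y) has_derivative (\<lambda>h. H v x *v h)) (at x)"
    by blast
  have hl: "h \<bullet> (H v x *v h) \<ge> - L * (norm h)\<^sup>2" for v x h
    using hess_lb[of "\<lambda>y. grad (\<lambda>z. P z v) y" "H v x" x L h] hH P_grad_lip by blast
  define \<sigma> where "\<sigma> = sigma_min M"
  have sm: "y \<bullet> (M *v y) \<ge> \<sigma> * (norm y)\<^sup>2" for y
    unfolding \<sigma>_def using sigma_min_quad[OF M_sym M_pd] by blast
  define mi where "mi i = \<sigma> / (\<delta> i)\<^sup>2 - L" for i
  have dpos: "\<delta> i > 0" if "i \<in> {1..N}" for i using \<delta>_pos that by auto
  have mi_pos: "mi i > 0" if i: "i \<in> {1..N}" for i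
  proof -
    have d: "\<delta> i > 0" using dpos i by blast
    have lt: "\<delta> i < sqrt (\<sigma> / L)" using \<delta>_small i \<sigma>_def by blast
    then have "sqrt (\<sigma> / L) > 0" using d by linarith
    then have sl: "\<sigma> / L > 0" by simp
    have "(\<delta> i)\<^sup>2 < (sqrt (\<sigma> / L))\<^sup>2" using lt d by (intro power_strict_mono) auto
    then have "(\<delta> i)\<^sup>2 < \<sigma> / L" using sl by simp
    then have "L * (\<delta> i)\<^sup>2 < \<sigma>" using L_pos by (simp add: field_simps)
    then have "L < \<sigma> / (\<delta> i)\<^sup>2" using d by (simp add: field_simps)
    then show ?thesis unfolding mi_def by simp
  qed
  define m where "m = Min (mi ` {1..N})"
  have m_pos: "m > 0" unfolding m_def using mi_pos N_ge by (subst Min_gr_iff) auto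
  have m_le: "m \<le> mi i" if "i \<in> {1..N}" for i unfolding m_def using that by simp
  have diag: "\<forall>x. x \<bullet> (Jb M \<delta> H u' \<iota>' th i i *v x) \<ge> m * (norm x)\<^sup>2"
    if i: "i \<in> {1..N}" for u' \<iota>' th i
  proof
    fix x :: "real^'n"
    have d: "\<delta> i > 0" using dpos i by blast
    have "x \<bullet> (Jb M \<delta> H u' \<iota>' th i i *v x) = (x \<bullet> (M *v x)) / (\<delta> i)\<^sup>2 + x \<bullet> (H (u' (\<iota>' i)) (th i) *v x)"
      unfolding Jb_def gam_same
      by (simp add: matrix_vector_mult_add_rdistrib scaleR_matrix_vector_assoc[symmetric] inner_add_right)
    also have "\<dots> \<ge> \<sigma> * (norm x)\<^sup>2 / (\<delta> i)\<^sup>2 - L * (norm x)\<^sup>2"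
    proof -
      have "(x \<bullet> (M *v x)) / (\<delta> i)\<^sup>2 \<ge> \<sigma> * (norm x)\<^sup>2 / (\<delta> i)\<^sup>2"
        using sm[of x] by (rule divide_right_mono) simp
      then show ?thesis using hl[of x "u' (\<iota>' i)" "th i"] by linarith
    qed
    moreover have "\<sigma> * (norm x)\<^sup>2 / (\<delta> i)\<^sup>2 - L * (norm x)\<^sup>2 = mi i * (norm x)\<^sup>2"
      unfolding mi_def by (simp add: field_simps)
    moreover have "mi i * (norm x)\<^sup>2 \<ge> m * (norm x)\<^sup>2" using m_le[OF i] by (simp add: mult_right_mono)
    ultimately show "x \<bullet> (Jb M \<delta> H u' \<iota>' th i i *v x) \<ge> m * (norm x)\<^sup>2" by linarith
  qed
  obtain BM where BM: "BM > 0" "\<forall>x. norm (M *v x) \<le> norm x * BM"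
    using bounded_linear.pos_bounded[OF matrix_vector_mul_bounded_linear[of M]] by blast
  have rr_nn: "rr \<delta> i \<ge> 0" if "i \<in> {1..N}" for i
  proof -
    have "\<delta> (i - 1) > 0" using \<delta>_pos that by auto
    then show ?thesis unfolding rr_def using dpos[OF that] by simp
  qed
  define A where "A = (\<Sum>i=1..N. (1 + rr \<delta> i) * BM / (\<delta> i)\<^sup>2)"
  have Ai_nn: "(1 + rr \<delta> i) * BM / (\<delta> i)\<^sup>2 \<ge> 0" if "i \<in> {1..N}" for i
    using rr_nn[OF that] BM by simp
  have A_nn: "A \<ge> 0" unfolding A_def using Ai_nn by (intro sum_nonneg) auto
  have Ai_le: "(1 + rr \<delta> i) * BM / (\<delta> i)\<^sup>2 \<le> A" if "i \<in> {1..N}" for i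
    unfolding A_def using Ai_nn that by (intro member_le_sum) auto
  have offb: "norm (Jb M \<delta> H u' \<iota>' th i k *v x) \<le> (if k < i then A * norm x else 0) \<and>
      norm (transpose (Jb M \<delta> H u' \<iota>' th i k) *v x) \<le> (if k < i then A * norm x else 0)"
    if i: "i \<in> {1..N}" and ki: "k \<noteq> i" for u' \<iota>' th i k x
  proof -
    let ?c = "gam \<delta> i k / (\<delta> i)\<^sup>2"
    have J: "Jb M \<delta> H u' \<iota>' th i k = ?c *\<^sub>R M" unfolding Jb_def using ki by simp
    have JT: "transpose (Jb M \<delta> H u' \<iota>' th i k) = ?c *\<^sub>R M" unfolding J transpose_scalar M_sym ..
    have v: "?c *\<^sub>R M *v x = ?c *\<^sub>R (M *v x)" by (simp add: scaleR_matrix_vector_assoc)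
    have bnd: "norm (?c *\<^sub>R (M *v x)) \<le> (if k < i then A * norm x else 0)"
    proof (cases "k < i")
      case True
      have d: "\<delta> i > 0" using dpos i by blast
      have "norm (?c *\<^sub>R (M *v x)) = \<bar>gam \<delta> i k\<bar> / (\<delta> i)\<^sup>2 * norm (M *v x)" by simp
      also have "\<dots> \<le> (1 + rr \<delta> i) / (\<delta> i)\<^sup>2 * (norm x * BM)"
        using gam_bound[OF rr_nn[OF i] ki] BM d
        by (intro mult_mono divide_right_mono) auto
      also have "\<dots> = (1 + rr \<delta> i) * BM / (\<delta> i)\<^sup>2 * norm x" by simp
      also have "\<dots> \<le> A * norm x" using Ai_le[OF i] by (intro mult_right_mono) auto
      finally show ?thesis using True by simp
    next
      case False
      then have "k > i" using ki by simp
      then have g0: "gam \<delta> i k = 0" by (rule gam_zero)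
      have "\<not> k < i" using False .
      then show ?thesis unfolding g0 by simp
    qed
    have e1: "Jb M \<delta> H u' \<iota>' th i k *v x = ?c *\<^sub>R (M *v x)" unfolding J v ..
    have e2: "transpose (Jb M \<delta> H u' \<iota>' th i k) *v x = ?c *\<^sub>R (M *v x)" unfolding JT v ..
    show ?thesis unfolding e1 e2 using bnd by blast
  qed
  define T where "T = Tb m A N"
  have T_pos: "T > 0" unfolding T_def using Tb_pos m_pos A_nn N_ge by blast
  note Gd = G_deriv[OF M_sym _ _ P_diff hH]
  have part2: "\<forall>(u' :: nat \<Rightarrow> 'u) \<iota>'. (\<forall>i\<in>{1..N}. \<iota>' i \<in> {1..N}) \<longrightarrow>
          (\<forall>th :: nat \<Rightarrow> real^'n.
             block_sigma_min N (Jblock M \<delta> P u' \<iota>' th0 thm1 th) \<ge> 1 / T)"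
  proof (intro allI impI)
    fix u' :: "nat \<Rightarrow> 'u" and \<iota>' :: "nat \<Rightarrow> nat" and th :: "nat \<Rightarrow> real^'n"
    let ?J = "Jblock M \<delta> P u' \<iota>' th0 thm1 th"
    let ?S = "{sqrt (\<Sum>i=1..N. (norm (\<Sum>k=1..N. ?J i k *v v k))\<^sup>2) | v.
            (\<Sum>k=1..N. (norm (v k))\<^sup>2) = 1}"
    show "1 / T \<le> block_sigma_min N ?J" unfolding block_sigma_min_def
    proof (rule cInf_greatest)
      obtain e :: "real^'n" where e: "norm e = 1"
        using vector_choose_size[of 1] by auto
      define v0 where "v0 k = (if k = (1::nat) then e else 0)" for k
      have "(\<Sum>k=1..N. (norm (v0 k))\<^sup>2) = (\<Sum>k=1..N. if k = 1 then 1 else 0)"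
        by (rule sum.cong) (auto simp: v0_def e)
      also have "\<dots> = 1" using N_ge by (subst sum.delta) auto
      finally have "(\<Sum>k=1..N. (norm (v0 k))\<^sup>2) = 1" .
      then show "?S \<noteq> {}" by blast
    next
      fix x assume "x \<in> ?S"
      then obtain v where xv: "x = sqrt (\<Sum>i=1..N. (norm (\<Sum>k=1..N. ?J i k *v v k))\<^sup>2)"
        and v1: "(\<Sum>k=1..N. (norm (v k))\<^sup>2) = 1" by blast
      define w where "w i = (\<Sum>k=1..N. Jb M \<delta> H u' \<iota>' th i k *v v k)" for i
      have wJ: "(\<Sum>k=1..N. ?J i k *v v k) = w i" if "i \<in> {1..N}" for i
        unfolding w_def using that by (intro sum.cong refl) (simp add: Jblock_eq[OF M_sym _ _ P_diff hH])
      define b where "b = sqrt (\<Sum>i=1..N. (norm (w i))\<^sup>2)"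
      have xb: "x = b" unfolding xv b_def
        by (intro arg_cong[where f=sqrt] sum.cong refl) (use wJ in auto)
      have b_nn: "b \<ge> 0" unfolding b_def by (simp add: sum_nonneg)
      have wb: "norm (w i) \<le> b" if "i \<in> {1..N}" for i
      proof -
        have "norm (w i) = sqrt ((norm (w i))\<^sup>2)" by simp
        also have "\<dots> \<le> b" unfolding b_def by (rule sqrt_member_le) (use that in auto)
        finally show ?thesis .
      qed
      have row: "m * norm (v i) \<le> b + A * (\<Sum>k\<in>{1..<i}. norm (v k))" if i: "i \<in> {1..N}" for i
      proof -
        let ?r = "\<Sum>k\<in>{1..N}-{i}. Jb M \<delta> H u' \<iota>' th i k *v v k"
        have wi: "w i = Jb M \<delta> H u' \<iota>' th i i *v v i + ?r"
          unfolding w_def using i by (simp add: sum.remove)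
        have "m * norm (v i) \<le> norm (Jb M \<delta> H u' \<iota>' th i i *v v i)"
          using coercive_norm(1)[OF diag[OF i]] m_pos by simp
        also have "Jb M \<delta> H u' \<iota>' th i i *v v i = w i - ?r" using wi by simp
        also have "norm (w i - ?r) \<le> norm (w i) + norm ?r" by (rule norm_triangle_ineq4)
        also have "norm ?r \<le> A * (\<Sum>k\<in>{1..<i}. norm (v k))"
        proof (rule offsum_fwd[OF i], intro ballI)
          fix k assume "k \<in> {1..N} - {i}"
          then have "k \<noteq> i" by blast
          from conjunct1[OF offb[OF i this]]
          show "norm (Jb M \<delta> H u' \<iota>' th i k *v v k) \<le> (if k < i then A * norm (v k) else 0)" .
        qed
        finally show ?thesis using wb[OF i] by linarith
      qed
      have sv: "(\<Sum>k=1..N. norm (v k)) \<le> T * b"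
        unfolding T_def using row m_pos A_nn b_nn by (intro tri_fwd) auto
      have "1 = (\<Sum>k=1..N. (norm (v k))\<^sup>2)" using v1 by simp
      also have "\<dots> \<le> (\<Sum>k=1..N. norm (v k))\<^sup>2" by (rule sum_sq_le) auto
      also have "\<dots> \<le> (T * b)\<^sup>2" using sv by (intro power_mono) (auto simp: sum_nonneg)
      finally have "1 \<le> (T * b)\<^sup>2" .
      then have "1 \<le> T * b" using T_pos b_nn
        by (metis abs_of_nonneg mult_nonneg_nonneg less_imp_le one_le_power abs_le_square_iff abs_one power_one)
      then show "1 / T \<le> x" unfolding xb using T_pos by (simp add: divide_le_eq mult.commute)
    qed
  qed
    have part3: "\<forall>th :: nat \<Rightarrow> real^'n.
          stacked_grad_norm2 N (Lam N M \<delta> P u \<iota> th0 thm1) th / 2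
            \<ge> (1 / T\<^sup>2) * (Lam N M \<delta> P u \<iota> th0 thm1 th - (INF s. Lam N M \<delta> P u \<iota> th0 thm1 s))"
  proof
    fix th :: "nat \<Rightarrow> real^'n"
    define Gv where "Gv i = Gi M \<delta> P u \<iota> th0 thm1 th i" for i
    define z where "z k = (\<Sum>i=1..N. transpose (Jb M \<delta> H u \<iota> th i k) *v Gv i)" for k
    have zeq: "grad (\<lambda>t. Lam N M \<delta> P u \<iota> th0 thm1 (th(k := t))) (th k) = z k"
      if k: "k \<in> {1..N}" for k
    proof -
      have "((\<lambda>t. (norm (Gi M \<delta> P u \<iota> th0 thm1 (th(k := t)) i))\<^sup>2 / 2) has_derivative
          (\<lambda>h. h \<bullet> (transpose (Jb M \<delta> H u \<iota> th i k) *v Gv i))) (at (th k))"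
        if i: "i \<in> {1..N}" for i
      proof -
        have "GDERIV (\<lambda>t. (norm (Gi M \<delta> P u \<iota> th0 thm1 (th(k := t)) i))\<^sup>2 / 2) (th k) :>
           (transpose (Jb M \<delta> H u \<iota> th i k) *v Gi M \<delta> P u \<iota> th0 thm1 (th(k := th k)) i)"
          using i k by (intro grad_halfnorm Gd) auto
        then show ?thesis unfolding gderiv_def Gv_def by simp
      qed
      then have "((\<lambda>t. \<Sum>i=1..N. (norm (Gi M \<delta> P u \<iota> th0 thm1 (th(k := t)) i))\<^sup>2 / 2) has_derivative
          (\<lambda>h. \<Sum>i=1..N. h \<bullet> (transpose (Jb M \<delta> H u \<iota> th i k) *v Gv i))) (at (th k))"
        by (intro has_derivative_sum) auto
      moreover have "(\<lambda>h. \<Sum>i=1..N. h \<bullet> (transpose (Jb M \<delta> H u \<iota> th i k) *v Gv i)) = (\<lambda>h. h \<bullet> z k)"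
        unfolding z_def by (simp add: inner_sum_right)
      moreover have "(\<lambda>t. Lam N M \<delta> P u \<iota> th0 thm1 (th(k := t))) =
          (\<lambda>t. \<Sum>i=1..N. (norm (Gi M \<delta> P u \<iota> th0 thm1 (th(k := t)) i))\<^sup>2 / 2)"
        unfolding Lam_def Lam_i_def ..
      ultimately have "GDERIV (\<lambda>t. Lam N M \<delta> P u \<iota> th0 thm1 (th(k := t))) (th k) :> z k"
        unfolding gderiv_def by simp
      then show ?thesis by (rule grad_eq)
    qed
    define b where "b = sqrt (\<Sum>k=1..N. (norm (z k))\<^sup>2)"
    have st: "stacked_grad_norm2 N (Lam N M \<delta> P u \<iota> th0 thm1) th = (\<Sum>k=1..N. (norm (z k))\<^sup>2)"
      unfolding stacked_grad_norm2_def by (intro sum.cong refl) (use zeq in auto)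
    have b_nn: "b \<ge> 0" unfolding b_def by (simp add: sum_nonneg)
    have b2: "b\<^sup>2 = stacked_grad_norm2 N (Lam N M \<delta> P u \<iota> th0 thm1) th"
      unfolding b_def st by (simp add: sum_nonneg)
    have zb: "norm (z k) \<le> b" if "k \<in> {1..N}" for k
    proof -
      have "norm (z k) = sqrt ((norm (z k))\<^sup>2)" by simp
      also have "\<dots> \<le> b" unfolding b_def by (rule sqrt_member_le) (use that in auto)
      finally show ?thesis .
    qed
    have col: "m * norm (Gv k) \<le> b + A * (\<Sum>i\<in>{k<..N}. norm (Gv i))" if k: "k \<in> {1..N}" for k
    proof -
      let ?r = "\<Sum>i\<in>{1..N}-{k}. transpose (Jb M \<delta> H u \<iota> th i k) *v Gv i"
      have zk: "z k = transpose (Jb M \<delta> H u \<iota> th k k) *v Gv k + ?r"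
        unfolding z_def using k by (simp add: sum.remove del: transpose_matrix_vector)
      have "m * norm (Gv k) \<le> norm (transpose (Jb M \<delta> H u \<iota> th k k) *v Gv k)"
        using coercive_norm(2)[OF diag[OF k]] m_pos by simp
      also have "transpose (Jb M \<delta> H u \<iota> th k k) *v Gv k = z k - ?r" using zk by simp
      also have "norm (z k - ?r) \<le> norm (z k) + norm ?r" by (rule norm_triangle_ineq4)
      also have "norm ?r \<le> A * (\<Sum>i\<in>{k<..N}. norm (Gv i))"
      proof (rule offsum_bwd[OF k], intro ballI)
        fix i assume i': "i \<in> {1..N} - {k}"
        then have i: "i \<in> {1..N}" and ki: "k \<noteq> i" by auto
        from conjunct2[OF offb[OF i ki]]
        show "norm (transpose (Jb M \<delta> H u \<iota> th i k) *v Gv i) \<le> (if k < i then A * norm (Gv i) else 0)" .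
      qed
      finally show ?thesis using zb[OF k] by linarith
    qed
    have sG: "(\<Sum>k=1..N. norm (Gv k)) \<le> T * b"
      unfolding T_def using col m_pos A_nn b_nn by (intro tri_bwd) auto
    have "Lam N M \<delta> P u \<iota> th0 thm1 th = (\<Sum>k=1..N. (norm (Gv k))\<^sup>2) / 2"
      unfolding Lam_def Lam_i_def Gv_def by (simp add: sum_divide_distrib)
    also have "\<dots> \<le> (\<Sum>k=1..N. norm (Gv k))\<^sup>2 / 2"
      by (intro divide_right_mono sum_sq_le) auto
    also have "\<dots> \<le> (T * b)\<^sup>2 / 2"
      using sG by (intro divide_right_mono power_mono) (auto simp: sum_nonneg)
    finally have LT: "Lam N M \<delta> P u \<iota> th0 thm1 th \<le> T\<^sup>2 * (stacked_grad_norm2 N (Lam N M \<delta> P u \<iota> th0 thm1) th / 2)"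
      unfolding b2[symmetric] by (simp add: power_mult_distrib)
    have Inf0: "(INF s. Lam N M \<delta> P u \<iota> th0 thm1 s) \<ge> 0"
      unfolding Lam_def Lam_i_def by (intro INF_nonneg allI sum_nonneg) auto
    have "(1 / T\<^sup>2) * (Lam N M \<delta> P u \<iota> th0 thm1 th - (INF s. Lam N M \<delta> P u \<iota> th0 thm1 s))
        \<le> (1 / T\<^sup>2) * Lam N M \<delta> P u \<iota> th0 thm1 th"
      using Inf0 T_pos by (intro mult_left_mono) auto
    also have "\<dots> \<le> stacked_grad_norm2 N (Lam N M \<delta> P u \<iota> th0 thm1) th / 2"
      using LT T_pos by (simp add: field_simps)
    finally show "stacked_grad_norm2 N (Lam N M \<delta> P u \<iota> th0 thm1) th / 2
            \<ge> (1 / T\<^sup>2) * (Lam N M \<delta> P u \<iota> th0 thm1 th - (INF s. Lam N M \<delta> P u \<iota> th0 thm1 s))" .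
  qed
  have part1: "\<forall>i\<in>{1..N}. \<forall>th :: nat \<Rightarrow> real^'n. \<forall>t.
        (norm (grad (\<lambda>s. Lam_i M \<delta> P u \<iota> th0 thm1 (th(i := s)) i) t))\<^sup>2 / 2
          \<ge> m\<^sup>2 * (Lam_i M \<delta> P u \<iota> th0 thm1 (th(i := t)) i
                  - (INF s. Lam_i M \<delta> P u \<iota> th0 thm1 (th(i := s)) i))"
  proof (intro ballI allI)
    fix i :: nat and th :: "nat \<Rightarrow> real^'n" and t :: "real^'n" assume i: "i \<in> {1..N}"
    define th' where "th' = th(i := t)"
    let ?G = "Gi M \<delta> P u \<iota> th0 thm1 th' i"
    have e1: "(\<lambda>s. Lam_i M \<delta> P u \<iota> th0 thm1 (th(i := s)) i) =
        (\<lambda>s. (norm (Gi M \<delta> P u \<iota> th0 thm1 (th'(i := s)) i))\<^sup>2 / 2)"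
      unfolding Lam_i_def th'_def by simp
    have ti: "th' i = t" unfolding th'_def by simp
    have upd: "th'(i := t) = th'" unfolding th'_def by simp
    have "GDERIV (\<lambda>s. (norm (Gi M \<delta> P u \<iota> th0 thm1 (th'(i := s)) i))\<^sup>2 / 2) (th' i) :>
        (transpose (Jb M \<delta> H u \<iota> th' i i) *v Gi M \<delta> P u \<iota> th0 thm1 (th'(i := th' i)) i)"
      using i by (intro grad_halfnorm Gd) auto
    then have "grad (\<lambda>s. Lam_i M \<delta> P u \<iota> th0 thm1 (th(i := s)) i) t =
        transpose (Jb M \<delta> H u \<iota> th' i i) *v ?G"
      unfolding e1 ti by (intro grad_eq) (simp add: upd)
    moreover have "norm (transpose (Jb M \<delta> H u \<iota> th' i i) *v ?G) \<ge> m * norm ?G"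
      using coercive_norm(2)[OF diag[OF i]] m_pos by simp
    ultimately have ng: "norm (grad (\<lambda>s. Lam_i M \<delta> P u \<iota> th0 thm1 (th(i := s)) i) t) \<ge> m * norm ?G"
      by simp
    have "(m * norm ?G)\<^sup>2 \<le> (norm (grad (\<lambda>s. Lam_i M \<delta> P u \<iota> th0 thm1 (th(i := s)) i) t))\<^sup>2"
      using ng m_pos by (intro power_mono) auto
    then have A1: "m\<^sup>2 * Lam_i M \<delta> P u \<iota> th0 thm1 (th(i := t)) i \<le>
        (norm (grad (\<lambda>s. Lam_i M \<delta> P u \<iota> th0 thm1 (th(i := s)) i) t))\<^sup>2 / 2"
      unfolding Lam_i_def th'_def[symmetric] by (simp add: power_mult_distrib)
    have Inf0: "(INF s. Lam_i M \<delta> P u \<iota> th0 thm1 (th(i := s)) i) \<ge> 0"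
      unfolding Lam_i_def by (intro INF_nonneg allI) auto
    have "m\<^sup>2 * (Lam_i M \<delta> P u \<iota> th0 thm1 (th(i := t)) i
                  - (INF s. Lam_i M \<delta> P u \<iota> th0 thm1 (th(i := s)) i))
        \<le> m\<^sup>2 * Lam_i M \<delta> P u \<iota> th0 thm1 (th(i := t)) i"
      using Inf0 by (intro mult_left_mono) auto
    then show "(norm (grad (\<lambda>s. Lam_i M \<delta> P u \<iota> th0 thm1 (th(i := s)) i) t))\<^sup>2 / 2
          \<ge> m\<^sup>2 * (Lam_i M \<delta> P u \<iota> th0 thm1 (th(i := t)) i
                  - (INF s. Lam_i M \<delta> P u \<iota> th0 thm1 (th(i := s)) i))" using A1 by linarith
  qed
  show ?thesis
  proof (intro conjI)
    show "\<forall>i\<in>{1..N}. \<forall>th :: nat \<Rightarrow> real^'n. \<exists>\<mu>>0. \<forall>t.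
        (norm (grad (\<lambda>s. Lam_i M \<delta> P u \<iota> th0 thm1 (th(i := s)) i) t))\<^sup>2 / 2
          \<ge> \<mu> * (Lam_i M \<delta> P u \<iota> th0 thm1 (th(i := t)) i
                  - (INF s. Lam_i M \<delta> P u \<iota> th0 thm1 (th(i := s)) i))"
      using part1 m_pos by (metis zero_less_power)
    show "\<exists>c>0. \<forall>(u' :: nat \<Rightarrow> 'u) \<iota>'. (\<forall>i\<in>{1..N}. \<iota>' i \<in> {1..N}) \<longrightarrow>
          (\<forall>th :: nat \<Rightarrow> real^'n.
             block_sigma_min N (Jblock M \<delta> P u' \<iota>' th0 thm1 th) \<ge> c)"
      using part2 T_pos by (intro exI[of _ "1 / T"]) auto
    show "\<exists>\<mu>>0. \<forall>th :: nat \<Rightarrow> real^'n.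
          stacked_grad_norm2 N (Lam N M \<delta> P u \<iota> th0 thm1) th / 2
            \<ge> \<mu> * (Lam N M \<delta> P u \<iota> th0 thm1 th - (INF s. Lam N M \<delta> P u \<iota> th0 thm1 s))"
      using part3 T_pos by (intro exI[of _ "1 / T\<^sup>2"]) auto
  qed
qed

end
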